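(* Fix $\sigma\in\mathcal A$ and a probability vector $\mathbf p$ with strictly positive entries. There exists a constant $C>1$ depending only on the sponge $F$ such that for all $\mathbf i\in\Sigma$, $0<R\le1$ and $r<\lambda_{\min}R$ for which $\mathbf i$ determines a $\sigma$-ordered cube both at scale $R$ and at scale $r$, \[ C^{-1}\Big(\frac Rr\Big)^{\underline S(\mathbf p,\sigma)}\le\frac{\mu_{\mathbf p}(B_{\mathbf i}(R))}{\mu_{\mathbf p}(B_{\mathbf i}(r))}\le C\Big(\frac Rr\Big)^{\overline S(\mathbf p,\sigma)}. \]
   Context: Setting: $\mathcal I=\{1,\dots,N\}$, $f_i(x)=A_ix+t_i$ on $\mathbb R^d$ with $A_i=\mathrm{diag}(\lambda_i^{(1)},\dots,\lambda_i^{(d)})$, all $\lambda_i^{(n)}\in(0,1)$, $f_i([0,1]^d)\subset[0,1]^d$, no two maps agree on $[0,1]^d$, and for all $m\ne n$ some $i$ has $\lambda_i^{(n)}\ne\lambda_i^{(m)}$; $F$ is the attractor. $\lambda_{\min}=\min_{i,n}\lambda_i^{(n)}$. $\Sigma=\mathcal I^{\mathbb N}$, $\mu_{\mathbf p}=\mathbf p^{\mathbb N}$. For $\mathbf i\in\Sigma$, $r>0$, $L_{\mathbf i}(r,n)$ is the unique integer with $\prod_{\ell=1}^{L_{\mathbf i}(r,n)}\lambda_{i_\ell}^{(n)}\le r<\prod_{\ell=1}^{L_{\mathbf i}(r,n)-1}\lambda_{i_\ell}^{(n)}$. $\mathbf i$ determines a $\sigma$-ordered cube at scale $r$ if $L_{\mathbf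 i}(r,\sigma_d)\le\dots\le L_{\mathbf i}(r,\sigma_1)$, ties resolved by: if coordinates $k<m$ have $L_{\mathbf i}(r,k)=L_{\mathbf i}(r,m)$ then $k$ precedes $m$ iff $\prod_{\ell=1}^{L_{\mathbf i}(r,k)}\lambda_{i_\ell}^{(k)}\ge\prod_{\ell=1}^{L_{\mathbf i}(r,k)}\lambda_{i_\ell}^{(m)}$. $\mathcal A$ is the set of $\sigma$ realised in this way by some $\mathbf i,r$. $E_n^\sigma$: span of coordinate axes $\sigma_1,\dots,\sigma_n$; $f_i,f_j$ overlap exactly on $E_n^\sigma$ if their orthogonal projections onto $E_n^\sigma$ agree on $[0,1]^d$. For $1\le n\le d-1$, $\mathcal I_n^\sigma$ is the set of $j$ such that no $i<j$ overlaps exactly with $j$ on $E_n^\sigma$; $\mathcal I_d^\sigma=\mathcal I$; $\Pi_n^\sigma j$ is the unique element of $\mathcal I_n^\sigma$ overlapping exactly with $j$ on $E_n^\sigma$ ($\Pi_d^\sigma=\mathrm{id}$, $\Pi_0^\sigma j=\emptyset$), extended to $\Sigma$ coordinatewise. $p_n^\sigma(i)=\sum_{j:\Pi_n^\sigma j=i}p(j)$, $p_0^\sigma(\emptyset)=1$, $P^\sigma_{n-1}(i)=p_n^\sigma(i)/p^\sigma_{n-1}(\Pi^\sigma_{n-1}i)$ for $i\in\mathcal I_n^\sigma$. $\overline S(\mathbf p,\sigma)=\sum_{n=1}^d\max_{i\in\mathcal I_n^\sigma}\frac{\log P^\sigma_{n-1}(i)}{\log\lambda_i^{(\sigma_n)}}$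 and $\underline S(\mathbf p,\sigma)$ is the same with $\min$. $B_{\mathbf i}(r)=\{\mathbf j\in\Sigma:|\Pi_n^\sigma\mathbf j\wedge\Pi_n^\sigma\mathbf i|\ge L_{\mathbf i}(r,\sigma_n)\ \forall n\}$, where $\sigma$ is the ordering of the cube determined by $\mathbf i$ at scale $r$ and $\wedge$ denotes the longest common prefix. *)

theory Defs
  imports "HOL-Probability.Probability"
begin

(* Conventions: maps are indexed by 0..N-1 (order preserved), coordinates by 0..d-1.
   A point of R^d is a function nat => real (only coordinates < d matter).
   lam i n = lambda_i^(n+1 in paper), t i n = translation. An ordering sigma is a
   permutation of {0..<d} with sigma a = sigma_{a+1} of the paper. *)

definition cube :: "nat \<Rightarrow> (nat \<Rightarrow> real) set" where
  "cube d = {x. \<forall>n<d. 0 \<le> x n \<and> x n \<le> 1}"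

definition fmap :: "(nat \<Rightarrow> nat \<Rightarrow> real) \<Rightarrow> (nat \<Rightarrow> nat \<Rightarrow> real) \<Rightarrow> nat \<Rightarrow> (nat \<Rightarrow> real) \<Rightarrow> (nat \<Rightarrow> real)" where
  "fmap lam t i x = (\<lambda>n. lam i n * x n + t i n)"

definition sponge_IFS :: "nat \<Rightarrow> nat \<Rightarrow> (nat \<Rightarrow> nat \<Rightarrow> real) \<Rightarrow> (nat \<Rightarrow> nat \<Rightarrow> real) \<Rightarrow> bool" where
  "sponge_IFS d N lam t \<longleftrightarrow> 1 \<le> d \<and> 1 \<le> N
     \<and> (\<forall>i<N. \<forall>n<d. 0 < lam i n \<and> lam i n < 1)
     \<and> (\<forall>i<N. fmap lam t i ` cube d \<subseteq> cube d)
     \<and> (\<forall>i<N. \<forall>j<N. i \<noteq> j \<longrightarrow> (\<exists>x\<in>cube d. \<exists>n<d. fmap lam t i x n \<noteq> fmap lam t j x n))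
     \<and> (\<forall>m<d. \<forall>n<d. m \<noteq> n \<longrightarrow> (\<exists>i<N. lam i n \<noteq> lam i m))"

definition lam_min :: "nat \<Rightarrow> nat \<Rightarrow> (nat \<Rightarrow> nat \<Rightarrow> real) \<Rightarrow> real" where
  "lam_min d N lam = Min {lam i n | i n. i < N \<and> n < d}"

definition SigmaN :: "nat \<Rightarrow> (nat \<Rightarrow> nat) set" where
  "SigmaN N = {i. \<forall>l. i l < N}"

definition cprod :: "(nat \<Rightarrow> nat \<Rightarrow> real) \<Rightarrow> (nat \<Rightarrow> nat) \<Rightarrow> nat \<Rightarrow> nat \<Rightarrow> real" where
  "cprod lam i L n = (\<Prod>l<L. lam (i l) n)"

(* L_i(r,n): the unique L with cprod L <= r < cprod (L-1) (for 0<r<1); the least such L *)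
definition Lfun :: "(nat \<Rightarrow> nat \<Rightarrow> real) \<Rightarrow> (nat \<Rightarrow> nat) \<Rightarrow> real \<Rightarrow> nat \<Rightarrow> nat" where
  "Lfun lam i r n = (LEAST L. cprod lam i L n \<le> r)"

definition prec :: "(nat \<Rightarrow> nat \<Rightarrow> real) \<Rightarrow> (nat \<Rightarrow> nat) \<Rightarrow> real \<Rightarrow> nat \<Rightarrow> nat \<Rightarrow> bool" where
  "prec lam i r k m \<longleftrightarrow>
     Lfun lam i r k > Lfun lam i r m \<or>
     (Lfun lam i r k = Lfun lam i r m \<and>
       ((k < m \<and> cprod lam i (Lfun lam i r k) k \<ge> cprod lam i (Lfun lam i r k) m) \<or>
        (m < k \<and> \<not> (cprod lam i (Lfun lam i r m) m \<ge> cprod lam i (Lfun lam i r m) k))))"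

definition perm_d :: "nat \<Rightarrow> (nat \<Rightarrow> nat) \<Rightarrow> bool" where
  "perm_d d \<sigma> \<longleftrightarrow> bij_betw \<sigma> {..<d} {..<d} \<and> (\<forall>n\<ge>d. \<sigma> n = n)"

definition ordered :: "nat \<Rightarrow> (nat \<Rightarrow> nat \<Rightarrow> real) \<Rightarrow> (nat \<Rightarrow> nat) \<Rightarrow> real \<Rightarrow> (nat \<Rightarrow> nat) \<Rightarrow> bool" where
  "ordered d lam i r \<sigma> \<longleftrightarrow> perm_d d \<sigma> \<and>
     (\<forall>a b. a < b \<and> b < d \<longrightarrow> prec lam i r (\<sigma> a) (\<sigma> b))"

definition Aset :: "nat \<Rightarrow> nat \<Rightarrow> (nat \<Rightarrow> nat \<Rightarrow> real) \<Rightarrow> (nat \<Rightarrow> nat) set" where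
  "Aset d N lam = {\<sigma>. \<exists>i\<in>SigmaN N. \<exists>r>0. ordered d lam i r \<sigma>}"

(* f_i, f_j overlap exactly on E_n^sigma (span of axes sigma_1..sigma_n) *)
definition overlap :: "nat \<Rightarrow> (nat \<Rightarrow> nat \<Rightarrow> real) \<Rightarrow> (nat \<Rightarrow> nat \<Rightarrow> real) \<Rightarrow> (nat \<Rightarrow> nat) \<Rightarrow> nat \<Rightarrow> nat \<Rightarrow> nat \<Rightarrow> bool" where
  "overlap d lam t \<sigma> n i j \<longleftrightarrow>
     (\<forall>x\<in>cube d. \<forall>k<n. fmap lam t i x (\<sigma> k) = fmap lam t j x (\<sigma> k))"

definition Iset :: "nat \<Rightarrow> nat \<Rightarrow> (nat \<Rightarrow> nat \<Rightarrow> real) \<Rightarrow> (nat \<Rightarrow> nat \<Rightarrow> real) \<Rightarrow> (nat \<Rightarrow> nat) \<Rightarrow> nat \<Rightarrow> nat set" where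
  "Iset d N lam t \<sigma> n =
     (if n = d then {..<N} else {j. j < N \<and> \<not> (\<exists>i<j. overlap d lam t \<sigma> n i j)})"

(* Pi_n^sigma; Pi_0^sigma j = emptyset is represented by 0 *)
definition Proj :: "nat \<Rightarrow> nat \<Rightarrow> (nat \<Rightarrow> nat \<Rightarrow> real) \<Rightarrow> (nat \<Rightarrow> nat \<Rightarrow> real) \<Rightarrow> (nat \<Rightarrow> nat) \<Rightarrow> nat \<Rightarrow> nat \<Rightarrow> nat" where
  "Proj d N lam t \<sigma> n j =
     (if n = d then j else if n = 0 then 0
      else (THE i. i \<in> Iset d N lam t \<sigma> n \<and> overlap d lam t \<sigma> n i j))"

definition pmass :: "nat \<Rightarrow> nat \<Rightarrow> (nat \<Rightarrow> nat \<Rightarrow> real) \<Rightarrow> (nat \<Rightarrow> nat \<Rightarrow> real) \<Rightarrow> nat pmf \<Rightarrow> (nat \<Rightarrow> nat) \<Rightarrow> nat \<Rightarrow> nat \<Rightarrow> real" where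
  "pmass d N lam t p \<sigma> n i =
     (if n = 0 then 1 else (\<Sum>j\<in>{j. j < N \<and> Proj d N lam t \<sigma> n j = i}. pmf p j))"

(* Pcond ... n i = P^sigma_{n-1}(i) for n >= 1 *)
definition Pcond :: "nat \<Rightarrow> nat \<Rightarrow> (nat \<Rightarrow> nat \<Rightarrow> real) \<Rightarrow> (nat \<Rightarrow> nat \<Rightarrow> real) \<Rightarrow> nat pmf \<Rightarrow> (nat \<Rightarrow> nat) \<Rightarrow> nat \<Rightarrow> nat \<Rightarrow> real" where
  "Pcond d N lam t p \<sigma> n i =
     pmass d N lam t p \<sigma> n i / pmass d N lam t p \<sigma> (n - 1) (Proj d N lam t \<sigma> (n - 1) i)"

definition Supper :: "nat \<Rightarrow> nat \<Rightarrow> (nat \<Rightarrow> nat \<Rightarrow> real) \<Rightarrow> (nat \<Rightarrow> nat \<Rightarrow> real) \<Rightarrow> nat pmf \<Rightarrow> (nat \<Rightarrow> nat) \<Rightarrow> real" where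
  "Supper d N lam t p \<sigma> = (\<Sum>n=1..d. Max ((\<lambda>i. ln (Pcond d N lam t p \<sigma> n i) / ln (lam i (\<sigma> (n - 1))))
                                         ` Iset d N lam t \<sigma> n))"

definition Slower :: "nat \<Rightarrow> nat \<Rightarrow> (nat \<Rightarrow> nat \<Rightarrow> real) \<Rightarrow> (nat \<Rightarrow> nat \<Rightarrow> real) \<Rightarrow> nat pmf \<Rightarrow> (nat \<Rightarrow> nat) \<Rightarrow> real" where
  "Slower d N lam t p \<sigma> = (\<Sum>n=1..d. Min ((\<lambda>i. ln (Pcond d N lam t p \<sigma> n i) / ln (lam i (\<sigma> (n - 1))))
                                         ` Iset d N lam t \<sigma> n))"

definition mu :: "nat pmf \<Rightarrow> (nat \<Rightarrow> nat) measure" where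
  "mu p = PiM UNIV (\<lambda>_::nat. measure_pmf p)"

definition ord_of :: "nat \<Rightarrow> (nat \<Rightarrow> nat \<Rightarrow> real) \<Rightarrow> (nat \<Rightarrow> nat) \<Rightarrow> real \<Rightarrow> (nat \<Rightarrow> nat)" where
  "ord_of d lam i r = (THE \<sigma>. ordered d lam i r \<sigma>)"

(* B_i(r): |Pi_n j ^ Pi_n i| >= L_i(r, sigma_n) for n = 1..d *)
definition Bball :: "nat \<Rightarrow> nat \<Rightarrow> (nat \<Rightarrow> nat \<Rightarrow> real) \<Rightarrow> (nat \<Rightarrow> nat \<Rightarrow> real) \<Rightarrow> (nat \<Rightarrow> nat) \<Rightarrow> real \<Rightarrow> (nat \<Rightarrow> nat) set" where
  "Bball d N lam t i r =
     (let \<sigma> = ord_of d lam i r in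
      {j \<in> SigmaN N. \<forall>n\<in>{1..d}. \<forall>l < Lfun lam i r (\<sigma> (n - 1)).
          Proj d N lam t \<sigma> n (j l) = Proj d N lam t \<sigma> n (i l)})"

end

theory Submission
  imports Defs
begin

lemma prec_irrefl: "\<not> prec lam i r k k" by (auto simp: prec_def)

lemma prec_asym: "prec lam i r k m \<Longrightarrow> \<not> prec lam i r m k"
  by (auto simp: prec_def)

lemma ordered_count:
  assumes o: "ordered d lam i r s" and a: "a < d"
  shows "card {c\<in>{..<d}. prec lam i r c (s a)} = a"
proof -
  have bij: "bij_betw s {..<d} {..<d}" using o by (simp add: ordered_def perm_d_def)
  have "{c\<in>{..<d}. prec lam i r c (s a)} = s ` {..<a}"
  proof (rule set_eqI, rule iffI)
    fix c assume c: "c \<in> {c\<in>{..<d}. prec lam i r c (s a)}"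
    then obtain b where b: "b < d" "c = s b" using bij unfolding bij_betw_def by auto
    have "b < a"
    proof (rule ccontr)
      assume "\<not> b < a"
      then consider "b = a" | "a < b" by linarith
      then show False
      proof cases
        case 1 then show False using c b prec_irrefl by auto
      next
        case 2 then have "prec lam i r (s a) (s b)" using o b unfolding ordered_def by auto
        then show False using c b prec_asym by auto
      qed
    qed
    then show "c \<in> s ` {..<a}" using b by auto
  next
    fix c assume "c \<in> s ` {..<a}"
    then obtain b where b: "b < a" "c = s b" by auto
    have bd: "b < d" using b a by simp
    have "prec lam i r (s b) (s a)" using o b(1) a unfolding ordered_def by blast
    moreover have "s b < d" using bij_betw_apply[OF bij] bd by simp
    ultimately show "c \<in> {c\<in>{..<d}. prec lam i r c (s a)}" using b by simp
  qed
  moreover have "inj_on s {..<a}" using bij a unfolding bij_betw_def by (auto intro: inj_on_subset)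
  ultimately show ?thesis by (simp add: card_image)
qed

lemma ordered_unique:
  assumes o1: "ordered d lam i r s" and o2: "ordered d lam i r s'"
  shows "s = s'"
proof
  fix a
  show "s a = s' a"
  proof (cases "a < d")
    case True
    have bij: "bij_betw s' {..<d} {..<d}" "bij_betw s {..<d} {..<d}"
      using o1 o2 by (simp_all add: ordered_def perm_d_def)
    have "s a \<in> s' ` {..<d}" using bij_betw_apply[OF bij(2)] bij_betw_imp_surj_on[OF bij(1)] True by simp
    then obtain b where b: "b < d" "s a = s' b" by auto
    have "a = b" using ordered_count[OF o1 True] ordered_count[OF o2 b(1)] b(2) by simp
    then show ?thesis using b by simp
  next
    case False
    then show ?thesis using o1 o2 by (simp add: ordered_def perm_d_def)
  qed
qed

lemma ord_of_eq: "ordered d lam i r s \<Longrightarrow> ord_of d lam i r = s"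
  unfolding ord_of_def using ordered_unique by blast

lemma ordered_L:
  assumes "ordered d lam i r s" "a \<le> b" "b < d"
  shows "Lfun lam i r (s b) \<le> Lfun lam i r (s a)"
proof (cases "a = b")
  case False
  then have "prec lam i r (s a) (s b)" using assms unfolding ordered_def by auto
  then show ?thesis unfolding prec_def by auto
qed simp

lemma aux_up:
  fixes X a b S :: real
  assumes "0 < X" "0 < a" "0 < b" "(a * b) powr S \<le> X"
  shows "1 / X \<le> (1 / a) powr S * (1 / b) powr S"
proof -
  have e: "(a * b) powr S * ((1 / a) powr S * (1 / b) powr S) = 1"
    using assms(2,3) by (simp add: powr_mult[symmetric])
  have p: "0 < (a * b) powr S" using assms(2,3) by simp
  have "1 / X \<le> 1 / (a * b) powr S" using assms(1,4) p mult_pos_pos[OF assms(1) p] by (intro divide_left_mono) auto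
  also have "\<dots> = (1 / a) powr S * (1 / b) powr S" using e p by (simp add: field_simps)
  finally show ?thesis .
qed

lemma aux_low:
  fixes X a b S :: real
  assumes "0 < X" "0 < a" "0 < b" "X \<le> ((1 / a) * b) powr S"
  shows "a powr S * (1 / b) powr S \<le> 1 / X"
proof -
  have e: "((1 / a) * b) powr S * (a powr S * (1 / b) powr S) = 1"
    using assms(2,3) by (simp add: powr_mult[symmetric])
  have p: "0 < ((1 / a) * b) powr S" using assms(2,3) by simp
  have "a powr S * (1 / b) powr S = 1 / ((1 / a) * b) powr S" using e p by (simp add: field_simps)
  also have "\<dots> \<le> 1 / X" using assms(1,4) p by (intro divide_left_mono) auto
  finally show ?thesis .
qed

locale spg =
  fixes d N :: nat and lam t :: "nat \<Rightarrow> nat \<Rightarrow> real" and p :: "nat pmf" and \<sigma> :: "nat \<Rightarrow> nat"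
  assumes sp: "sponge_IFS d N lam t"
    and pm: "perm_d d \<sigma>"
    and sp_p: "set_pmf p = {..<N}"
begin

lemma d1: "1 \<le> d" and N1: "1 \<le> N" using sp by (auto simp: sponge_IFS_def)

lemma lam_pos: "i < N \<Longrightarrow> n < d \<Longrightarrow> 0 < lam i n"
  and lam_lt1: "i < N \<Longrightarrow> n < d \<Longrightarrow> lam i n < 1"
  using sp by (auto simp: sponge_IFS_def)

definition "lset = {lam i n | i n. i < N \<and> n < d}"

lemma lset_fin: "finite lset"
proof -
  have "lset = (\<lambda>(i,n). lam i n) ` ({..<N} \<times> {..<d})" by (auto simp: lset_def)
  then show ?thesis by simp
qed

lemma lset_ne: "lset \<noteq> {}"
proof -
  have "lam 0 0 \<in> lset" using d1 N1 unfolding lset_def by force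
  then show ?thesis by auto
qed

lemma lmin_def': "lam_min d N lam = Min lset" by (simp add: lam_min_def lset_def)

lemma lmin_le: "i < N \<Longrightarrow> n < d \<Longrightarrow> lam_min d N lam \<le> lam i n"
  unfolding lmin_def' by (rule Min_le[OF lset_fin]) (auto simp: lset_def)

lemma lmin_pos: "0 < lam_min d N lam"
  unfolding lmin_def' using lset_fin lset_ne by (subst Min_gr_iff) (auto simp: lset_def lam_pos)

lemma lmin_lt1: "lam_min d N lam < 1"
  using lmin_le[of 0 0] lam_lt1[of 0 0] d1 N1 by simp

definition "lmax = Max lset"

lemma lmax_ge: "i < N \<Longrightarrow> n < d \<Longrightarrow> lam i n \<le> lmax"
  unfolding lmax_def by (rule Max_ge[OF lset_fin]) (auto simp: lset_def)

lemma lmax_lt1: "lmax < 1"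
  unfolding lmax_def using lset_fin lset_ne by (subst Max_less_iff) (auto simp: lset_def lam_lt1)

lemma lmax_pos: "0 < lmax"
  using lmax_ge[of 0 0] lam_pos[of 0 0] d1 N1 by simp


abbreviation "ov \<equiv> overlap d lam t \<sigma>"

lemma ov_refl: "ov n a a" by (simp add: overlap_def)
lemma ov_sym: "ov n a b \<Longrightarrow> ov n b a" by (simp add: overlap_def)
lemma ov_trans: "ov n a b \<Longrightarrow> ov n b c \<Longrightarrow> ov n a c" by (simp add: overlap_def)
lemma ov_mono: "ov n a b \<Longrightarrow> m \<le> n \<Longrightarrow> ov m a b" by (simp add: overlap_def)

lemma cube0: "(\<lambda>_. 0) \<in> cube d" and cube1: "(\<lambda>_. 1) \<in> cube d" by (auto simp: cube_def)

lemma ov_lam: assumes "ov n a b" "k < n" shows "lam a (\<sigma> k) = lam b (\<sigma> k)"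
proof -
  have "fmap lam t a (\<lambda>_. 0) (\<sigma> k) = fmap lam t b (\<lambda>_. 0) (\<sigma> k)"
       "fmap lam t a (\<lambda>_. 1) (\<sigma> k) = fmap lam t b (\<lambda>_. 1) (\<sigma> k)"
    using assms cube0 cube1 unfolding overlap_def by blast+
  then show ?thesis by (simp add: fmap_def)
qed

lemma ov_d: assumes "ov d a b" "a < N" "b < N" shows "a = b"
proof (rule ccontr)
  assume "a \<noteq> b"
  then obtain x n where x: "x \<in> cube d" "n < d" "fmap lam t a x n \<noteq> fmap lam t b x n"
    using sp assms(2,3) unfolding sponge_IFS_def by blast
  have "n \<in> \<sigma> ` {..<d}" using pm x(2) unfolding perm_d_def bij_betw_def by auto
  then obtain k where "k < d" "n = \<sigma> k" by auto
  then show False using assms(1) x unfolding overlap_def by blast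
qed

lemma Iset_sub: "Iset d N lam t \<sigma> n \<subseteq> {..<N}" by (auto simp: Iset_def)

lemma Proj_small:
  assumes "1 \<le> n" "n < d" "a < N"
  shows "Proj d N lam t \<sigma> n a \<in> Iset d N lam t \<sigma> n \<and> ov n (Proj d N lam t \<sigma> n a) a"
proof -
  define m where "m = (LEAST i. ov n i a)"
  have m1: "ov n m a" unfolding m_def by (rule LeastI[of _ a]) (rule ov_refl)
  have m2: "m \<le> a" unfolding m_def by (rule Least_le) (rule ov_refl)
  have m3: "\<not> ov n i a" if "i < m" for i using not_less_Least[of i "\<lambda>i. ov n i a"] that m_def by simp
  have mI: "m \<in> Iset d N lam t \<sigma> n"
    using assms m2 m3 m1 ov_trans unfolding Iset_def by (auto intro: ov_trans[OF _ m1])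
  have uniq: "i = m" if "i \<in> Iset d N lam t \<sigma> n" "ov n i a" for i
  proof -
    have "ov n i m" using that(2) m1 ov_sym ov_trans by blast
    moreover have "\<not> (i < m)" using mI \<open>ov n i m\<close> assms(2) unfolding Iset_def by auto
    moreover have "\<not> (m < i)" using that(1) \<open>ov n i m\<close> ov_sym[of n i m] assms(2) unfolding Iset_def by auto
    ultimately show ?thesis by simp
  qed
  have "(THE i. i \<in> Iset d N lam t \<sigma> n \<and> ov n i a) = m"
    by (rule the_equality) (use mI m1 uniq in blast)+
  then have "Proj d N lam t \<sigma> n a = m"
    unfolding Proj_def using assms(1,2) by auto
  then show ?thesis using mI m1 by simp
qed

lemma Proj_props:
  assumes "1 \<le> n" "n \<le> d" "a < N"
  shows "Proj d N lam t \<sigma> n a \<in> Iset d N lam t \<sigma> n" "ov n (Proj d N lam t \<sigma> n a) a"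
    "Proj d N lam t \<sigma> n a < N"
proof -
  show 1: "Proj d N lam t \<sigma> n a \<in> Iset d N lam t \<sigma> n" "ov n (Proj d N lam t \<sigma> n a) a"
  proof -
    have "(Proj d N lam t \<sigma> n a \<in> Iset d N lam t \<sigma> n) \<and> ov n (Proj d N lam t \<sigma> n a) a"
    proof (cases "n = d")
      case True then show ?thesis using assms by (simp add: Proj_def Iset_def ov_refl)
    next
      case False then show ?thesis using Proj_small assms by simp
    qed
    then show "Proj d N lam t \<sigma> n a \<in> Iset d N lam t \<sigma> n" "ov n (Proj d N lam t \<sigma> n a) a" by auto
  qed
  then show "Proj d N lam t \<sigma> n a < N" using Iset_sub by auto
qed

lemma Proj_eq:
  assumes "1 \<le> n" "n \<le> d" "a < N" "b < N"
  shows "Proj d N lam t \<sigma> n a = Proj d N lam t \<sigma> n b \<longleftrightarrow> ov n a b"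
proof (cases "n = d")
  case True
  then show ?thesis using ov_d[OF _ assms(3,4)] ov_refl by (auto simp: Proj_def)
next
  case False
  note pa = Proj_props[OF assms(1,2,3)] and pb = Proj_props[OF assms(1,2,4)]
  show ?thesis
  proof
    assume "Proj d N lam t \<sigma> n a = Proj d N lam t \<sigma> n b"
    then show "ov n a b" using pa(2) pb(2) ov_sym[OF pa(2)] ov_trans[OF ov_sym[OF pa(2)]] by simp
  next
    assume ab: "ov n a b"
    have "ov n (Proj d N lam t \<sigma> n a) b" using pa ab ov_trans by blast
    have u: "i = Proj d N lam t \<sigma> n b" if "i \<in> Iset d N lam t \<sigma> n" "ov n i b" for i
    proof -
      have "ov n i (Proj d N lam t \<sigma> n b)" using that pb ov_sym ov_trans by blast
      moreover have "\<not> (i < Proj d N lam t \<sigma> n b)" using pb(1) \<open>ov n i (Proj d N lam t \<sigma> n b)\<close> False unfolding Iset_def by auto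
      moreover have "\<not> (Proj d N lam t \<sigma> n b < i)" using that(1) \<open>ov n i (Proj d N lam t \<sigma> n b)\<close> ov_sym[of n i] False unfolding Iset_def by auto
      ultimately show ?thesis by simp
    qed
    then show "Proj d N lam t \<sigma> n a = Proj d N lam t \<sigma> n b"
      using pa \<open>ov n (Proj d N lam t \<sigma> n a) b\<close> by blast
  qed
qed

lemma Proj_comp:
  assumes "1 \<le> m" "m \<le> n" "n \<le> d" "a < N"
  shows "Proj d N lam t \<sigma> m (Proj d N lam t \<sigma> n a) = Proj d N lam t \<sigma> m a"
  using Proj_eq[OF assms(1) _ Proj_props(3)[OF _ assms(3,4)] assms(4)] Proj_props(2)[OF _ assms(3,4)]
    ov_mono assms by auto

lemma Proj_lam:
  assumes "1 \<le> n" "n \<le> d" "a < N"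
  shows "lam (Proj d N lam t \<sigma> n a) (\<sigma> (n - 1)) = lam a (\<sigma> (n - 1))"
  using ov_lam[OF Proj_props(2)[OF assms]] assms(1) by simp


abbreviation "Pj \<equiv> Proj d N lam t \<sigma>"

definition "D m a = {x. x < N \<and> (\<forall>n\<in>{1..m}. Pj n x = Pj n a)}"
definition "w m a = measure (measure_pmf p) (D m a)"
definition "g n a = Pcond d N lam t p \<sigma> n (Pj n a)"

lemma D_sub: "D m a \<subseteq> {..<N}" by (auto simp: D_def)
lemma D_fin: "finite (D m a)" using D_sub finite_subset by blast
lemma D_mem: "a < N \<Longrightarrow> a \<in> D m a" by (simp add: D_def)
lemma D_0: "D 0 a = {..<N}" by (auto simp: D_def)

lemma pmf_pos: "x < N \<Longrightarrow> 0 < pmf p x"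
  using pmf_positive[of x p] sp_p by auto

lemma measure_N: "measure (measure_pmf p) {..<N} = 1"
  using measure_Int_set_pmf[of p UNIV] sp_p by simp

lemma w_sum: "w m a = sum (pmf p) (D m a)"
  unfolding w_def by (rule measure_measure_pmf_finite[OF D_fin])

lemma w_pos: assumes "a < N" shows "0 < w m a"
proof -
  have "pmf p a \<le> sum (pmf p) (D m a)"
    by (rule member_le_sum) (auto simp: D_fin D_mem assms)
  then show ?thesis using pmf_pos[OF assms] w_sum by simp
qed

lemma w_0: "w 0 a = 1" unfolding w_def D_0 by (rule measure_N)

lemma D_alt: assumes "1 \<le> m" "m \<le> d" "a < N"
  shows "D m a = {x. x < N \<and> Pj m x = Pj m a}"
proof -
  have "Pj n x = Pj n a" if "x < N" "Pj m x = Pj m a" "n \<in> {1..m}" for x n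
  proof -
    have "ov m x a" using Proj_eq[OF assms(1,2) that(1) assms(3)] that(2) by simp
    then have "ov n x a" using ov_mono that(3) by auto
    then show ?thesis using Proj_eq[of n x a] that assms by auto
  qed
  note h = this
  show ?thesis
  proof (rule set_eqI, rule iffI)
    fix x assume "x \<in> D m a" then show "x \<in> {x. x < N \<and> Pj m x = Pj m a}"
      using assms unfolding D_def by auto
  next
    fix x assume "x \<in> {x. x < N \<and> Pj m x = Pj m a}" then show "x \<in> D m a"
      using h unfolding D_def by blast
  qed
qed

lemma pmass_w: assumes "1 \<le> m" "m \<le> d" "a < N"
  shows "pmass d N lam t p \<sigma> m (Pj m a) = w m a"
  using assms by (simp add: pmass_def w_sum D_alt)

lemma pmass_prev: assumes "1 \<le> m" "m \<le> d" "a < N"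
  shows "pmass d N lam t p \<sigma> (m - 1) (Pj (m - 1) (Pj m a)) = w (m - 1) a"
proof (cases "m = 1")
  case True then show ?thesis by (simp add: pmass_def w_0)
next
  case False
  then have "Pj (m - 1) (Pj m a) = Pj (m - 1) a" using assms by (intro Proj_comp) auto
  then show ?thesis using pmass_w[of "m - 1" a] assms False by simp
qed

lemma g_eq: assumes "1 \<le> m" "m \<le> d" "a < N"
  shows "g m a = w m a / w (m - 1) a"
  unfolding g_def Pcond_def pmass_w[OF assms] pmass_prev[OF assms] ..

lemma D_anti: "m' \<le> m \<Longrightarrow> D m a \<subseteq> D m' a" by (auto simp: D_def)

lemma w_anti: "m' \<le> m \<Longrightarrow> w m a \<le> w m' a"
  unfolding w_def using D_anti D_fin
  by (intro measure_pmf.finite_measure_mono) auto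

lemma g_pos: "1 \<le> m \<Longrightarrow> m \<le> d \<Longrightarrow> a < N \<Longrightarrow> 0 < g m a"
  using g_eq w_pos by simp

lemma g_le1: "1 \<le> m \<Longrightarrow> m \<le> d \<Longrightarrow> a < N \<Longrightarrow> g m a \<le> 1"
  using g_eq w_pos w_anti[of "m - 1" m a] by simp

lemma w_prod: "m \<le> d \<Longrightarrow> a < N \<Longrightarrow> w m a = (\<Prod>n\<in>{1..m}. g n a)"
proof (induction m)
  case 0 then show ?case by (simp add: w_0)
next
  case (Suc m)
  have "(\<Prod>n\<in>{1..Suc m}. g n a) = (\<Prod>n\<in>{1..m}. g n a) * g (Suc m) a"
    by (simp add: prod.nat_ivl_Suc')
  also have "\<dots> = w m a * (w (Suc m) a / w m a)" using Suc g_eq[of "Suc m" a] by simp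
  also have "\<dots> = w (Suc m) a" using w_pos[OF Suc.prems(2), of m] by simp
  finally show ?case by simp
qed


lemma Sig: "i \<in> SigmaN N \<Longrightarrow> i l < N" by (simp add: SigmaN_def)

lemma cprod_pos: "i \<in> SigmaN N \<Longrightarrow> c < d \<Longrightarrow> 0 < cprod lam i L c"
  unfolding cprod_def by (rule prod_pos) (auto intro: lam_pos Sig)

lemma cprod_Suc: "cprod lam i (Suc L) c = cprod lam i L c * lam (i L) c"
  by (simp add: cprod_def)

lemma cprod_0: "cprod lam i 0 c = 1" by (simp add: cprod_def)

lemma cprod_pow: assumes "i \<in> SigmaN N" "c < d" shows "cprod lam i L c \<le> lmax ^ L"
proof -
  have "cprod lam i L c \<le> (\<Prod>l<L. lmax)" unfolding cprod_def
    by (rule prod_mono) (use assms lam_pos lmax_ge Sig in \<open>auto intro: less_imp_le\<close>)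
  then show ?thesis by simp
qed

lemma L_ex: assumes "i \<in> SigmaN N" "c < d" "0 < r" shows "\<exists>L. cprod lam i L c \<le> r"
proof -
  obtain L where "lmax ^ L < r" using real_arch_pow_inv[OF assms(3) lmax_lt1] by blast
  then show ?thesis using cprod_pow[OF assms(1,2), of L] by (intro exI[of _ L]) simp
qed

lemma L_le: assumes "i \<in> SigmaN N" "c < d" "0 < r" shows "cprod lam i (Lfun lam i r c) c \<le> r"
  unfolding Lfun_def by (rule LeastI_ex) (rule L_ex[OF assms])

lemma L_gt: assumes "i \<in> SigmaN N" "c < d" "0 < r" "r \<le> 1"
  shows "lam_min d N lam * r < cprod lam i (Lfun lam i r c) c"
proof (cases "Lfun lam i r c")
  case 0
  have "lam_min d N lam * r \<le> lam_min d N lam * 1"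
    using lmin_pos assms(4) by (intro mult_left_mono) auto
  then show ?thesis using 0 cprod_0 lmin_lt1 by simp
next
  case (Suc K)
  have "\<not> cprod lam i K c \<le> r" using not_less_Least[of K "\<lambda>L. cprod lam i L c \<le> r"] Suc
    unfolding Lfun_def by simp
  then have h: "r < cprod lam i K c" by simp
  have lp: "0 < lam (i K) c" using lam_pos[OF Sig[OF assms(1)] assms(2)] .
  have "lam_min d N lam * r \<le> lam (i K) c * r"
    using lmin_le[OF Sig[OF assms(1)] assms(2)] assms(3) by (intro mult_right_mono) auto
  also have "\<dots> < lam (i K) c * cprod lam i K c" using h lp by simp
  finally show ?thesis using Suc cprod_Suc by (simp add: mult.commute)
qed

lemma L_mono: assumes "i \<in> SigmaN N" "c < d" "0 < r" "r \<le> R"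
  shows "Lfun lam i R c \<le> Lfun lam i r c"
proof -
  have "cprod lam i (Lfun lam i r c) c \<le> R" using L_le[OF assms(1-3)] assms(4) by simp
  then show ?thesis unfolding Lfun_def[of lam i R] by (rule Least_le)
qed

lemma cprod_split: assumes "a \<le> b"
  shows "cprod lam i b c = cprod lam i a c * (\<Prod>l\<in>{a..<b}. lam (i l) c)"
proof -
  have "(\<Prod>l\<in>{..<a} \<union> {a..<b}. lam (i l) c) = (\<Prod>l<a. lam (i l) c) * (\<Prod>l\<in>{a..<b}. lam (i l) c)"
    by (rule prod.union_disjoint) auto
  then show ?thesis unfolding cprod_def ivl_disj_un_one(2)[OF assms] .
qed


definition "Ev i r l = {x. x < N \<and> (\<forall>n\<in>{1..d}. l < Lfun lam i r (\<sigma> (n - 1)) \<longrightarrow> Pj n x = Pj n (i l))}"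

lemma B_eq: assumes "ordered d lam i r \<sigma>"
  shows "Bball d N lam t i r = Pi UNIV (Ev i r)"
  unfolding Bball_def ord_of_eq[OF assms] Let_def Ev_def SigmaN_def Pi_def by auto

lemma Ln_anti: assumes "ordered d lam i r \<sigma>" "1 \<le> n'" "n' \<le> n" "n \<le> d"
  shows "Lfun lam i r (\<sigma> (n - 1)) \<le> Lfun lam i r (\<sigma> (n' - 1))"
  using ordered_L[OF assms(1), of "n' - 1" "n - 1"] assms by simp

lemma Ev_meas: assumes o: "ordered d lam i r \<sigma>" and i: "i \<in> SigmaN N"
  shows "measure (measure_pmf p) (Ev i r l) =
     (\<Prod>n\<in>{1..d}. if l < Lfun lam i r (\<sigma> (n - 1)) then g n (i l) else 1)"
proof -
  define S where "S = {n\<in>{1..d}. l < Lfun lam i r (\<sigma> (n - 1))}"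
  define k where "k = Max (insert 0 S)"
  have finS: "finite (insert 0 S)" unfolding S_def by simp
  have kin: "k \<in> insert 0 S" unfolding k_def by (rule Max_in[OF finS]) simp
  have kd: "k \<le> d" using kin unfolding S_def by auto
  have Sk: "S = {1..k}"
  proof (rule set_eqI, rule iffI)
    fix n assume n: "n \<in> S"
    then have "n \<le> k" unfolding k_def using finS by (intro Max_ge) auto
    then show "n \<in> {1..k}" using n unfolding S_def by auto
  next
    fix n assume n: "n \<in> {1..k}"
    then have "k \<noteq> 0" by auto
    then have kS: "k \<in> S" using kin by auto
    then have "l < Lfun lam i r (\<sigma> (k - 1))" "k \<le> d" unfolding S_def by auto
    moreover have "Lfun lam i r (\<sigma> (k - 1)) \<le> Lfun lam i r (\<sigma> (n - 1))"
      using Ln_anti[OF o, of n k] n kd by auto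
    ultimately show "n \<in> S" using n kd unfolding S_def by auto
  qed
  have Sk': "(n \<in> {1..d} \<and> l < Lfun lam i r (\<sigma> (n - 1))) \<longleftrightarrow> n \<in> {1..k}" for n
    using Sk unfolding S_def set_eq_iff by blast
  have "Ev i r l = D k (i l)" unfolding Ev_def D_def using Sk' by blast
  then have "measure (measure_pmf p) (Ev i r l) = w k (i l)" by (simp add: w_def)
  also have "\<dots> = (\<Prod>n\<in>{1..k}. g n (i l))" using w_prod[OF kd Sig[OF i]] .
  also have "\<dots> = (\<Prod>n\<in>S. g n (i l))" using Sk by simp
  also have "\<dots> = (\<Prod>n\<in>{1..d}. if l < Lfun lam i r (\<sigma> (n - 1)) then g n (i l) else 1)"
    unfolding S_def by (rule prod.inter_filter) simp
  finally show ?thesis .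
qed

lemma mu_B: assumes o: "ordered d lam i r \<sigma>" and i: "i \<in> SigmaN N"
  shows "measure (mu p) (Bball d N lam t i r) =
     (\<Prod>n\<in>{1..d}. \<Prod>l<Lfun lam i r (\<sigma> (n - 1)). g n (i l))"
proof -
  interpret sq: sequence_space "measure_pmf p" by unfold_locales
  define K where "K = Lfun lam i r (\<sigma> 0)"
  have LK: "Lfun lam i r (\<sigma> (n - 1)) \<le> K" if "n \<in> {1..d}" for n
    using Ln_anti[OF o, of 1 n] that unfolding K_def by auto
  have EvK: "Ev i r l = {..<N}" if "K \<le> l" for l
    using LK that unfolding Ev_def by fastforce
  have lim: "(\<lambda>n. \<Prod>l\<le>n. measure (measure_pmf p) (Ev i r l)) \<longlonglongrightarrow> measure (mu p) (Pi UNIV (Ev i r))"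
    using sq.measure_PiM_countable[of "Ev i r"] unfolding mu_def by simp
  have ev: "\<forall>\<^sub>F n in sequentially. (\<Prod>l\<le>n. measure (measure_pmf p) (Ev i r l)) = (\<Prod>l<K. measure (measure_pmf p) (Ev i r l))"
    unfolding eventually_sequentially
  proof (intro exI allI impI)
    fix n assume "K \<le> n"
    then have e: "{..n} = {..<K} \<union> {K..n}" by auto
    have "(\<Prod>l\<in>{..<K} \<union> {K..n}. measure (measure_pmf p) (Ev i r l)) =
       (\<Prod>l<K. measure (measure_pmf p) (Ev i r l)) * (\<Prod>l\<in>{K..n}. measure (measure_pmf p) (Ev i r l))"
      by (rule prod.union_disjoint) auto
    then have "(\<Prod>l\<le>n. measure (measure_pmf p) (Ev i r l)) =
       (\<Prod>l<K. measure (measure_pmf p) (Ev i r l)) * (\<Prod>l\<in>{K..n}. measure (measure_pmf p) (Ev i r l))"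
      unfolding e .
    also have "(\<Prod>l\<in>{K..n}. measure (measure_pmf p) (Ev i r l)) = 1"
      using EvK measure_N by (intro prod.neutral) auto
    finally show "(\<Prod>l\<le>n. measure (measure_pmf p) (Ev i r l)) = (\<Prod>l<K. measure (measure_pmf p) (Ev i r l))" by simp
  qed
  have "measure (mu p) (Bball d N lam t i r) = (\<Prod>l<K. measure (measure_pmf p) (Ev i r l))"
    using LIMSEQ_unique[OF lim tendsto_eventually[OF ev]] B_eq[OF o] by simp
  also have "\<dots> = (\<Prod>l<K. \<Prod>n\<in>{1..d}. if l < Lfun lam i r (\<sigma> (n - 1)) then g n (i l) else 1)"
    using Ev_meas[OF o i] by simp
  also have "\<dots> = (\<Prod>n\<in>{1..d}. \<Prod>l<K. if l < Lfun lam i r (\<sigma> (n - 1)) then g n (i l) else 1)"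
    by (rule prod.swap)
  also have "\<dots> = (\<Prod>n\<in>{1..d}. \<Prod>l<Lfun lam i r (\<sigma> (n - 1)). g n (i l))"
  proof (rule prod.cong[OF refl])
    fix n assume n: "n \<in> {1..d}"
    have "(\<Prod>l<K. if l < Lfun lam i r (\<sigma> (n - 1)) then g n (i l) else 1) =
        (\<Prod>l\<in>{l\<in>{..<K}. l < Lfun lam i r (\<sigma> (n - 1))}. g n (i l))"
      by (rule prod.inter_filter[symmetric]) simp
    also have "{l\<in>{..<K}. l < Lfun lam i r (\<sigma> (n - 1))} = {..<Lfun lam i r (\<sigma> (n - 1))}"
      using LK[OF n] by auto
    finally show "(\<Prod>l<K. if l < Lfun lam i r (\<sigma> (n - 1)) then g n (i l) else 1) =
        (\<Prod>l<Lfun lam i r (\<sigma> (n - 1)). g n (i l))" .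
  qed
  finally show ?thesis .
qed


lemma sig_lt: "k < d \<Longrightarrow> \<sigma> k < d"
  using pm bij_betw_apply unfolding perm_d_def by fastforce

lemma Proj_fix: assumes "1 \<le> n" "n \<le> d" "j \<in> Iset d N lam t \<sigma> n" shows "Pj n j = j"
proof (cases "n = d")
  case True then show ?thesis by (simp add: Proj_def)
next
  case False
  have jN: "j < N" using assms(3) Iset_sub by auto
  note pr = Proj_props[OF assms(1,2) jN]
  have "\<not> Pj n j < j" using assms(3) pr(2) False unfolding Iset_def by auto
  moreover have "\<not> j < Pj n j" using pr(1) ov_sym[OF pr(2)] False unfolding Iset_def by auto
  ultimately show ?thesis by simp
qed

definition "sfun n = (\<lambda>j. ln (Pcond d N lam t p \<sigma> n j) / ln (lam j (\<sigma> (n - 1))))"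
definition "Mx n = Max (sfun n ` Iset d N lam t \<sigma> n)"
definition "Mn n = Min (sfun n ` Iset d N lam t \<sigma> n)"

lemma Supper_eq: "Supper d N lam t p \<sigma> = (\<Sum>n=1..d. Mx n)"
  unfolding Supper_def Mx_def sfun_def ..
lemma Slower_eq: "Slower d N lam t p \<sigma> = (\<Sum>n=1..d. Mn n)"
  unfolding Slower_def Mn_def sfun_def ..

lemma sfun_Pj: assumes "1 \<le> n" "n \<le> d" "a < N"
  shows "sfun n (Pj n a) = ln (g n a) / ln (lam a (\<sigma> (n - 1)))"
  unfolding sfun_def g_def using Proj_lam[OF assms] by simp

lemma g_powr: assumes "1 \<le> n" "n \<le> d" "a < N"
  shows "g n a = lam a (\<sigma> (n - 1)) powr sfun n (Pj n a)"
proof -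
  have c: "\<sigma> (n - 1) < d" using sig_lt assms by simp
  have l0: "0 < lam a (\<sigma> (n - 1))" "lam a (\<sigma> (n - 1)) < 1" using lam_pos lam_lt1 c assms by auto
  then have "ln (lam a (\<sigma> (n - 1))) \<noteq> 0" by simp
  then have "lam a (\<sigma> (n - 1)) powr sfun n (Pj n a) = exp (ln (g n a))"
    unfolding sfun_Pj[OF assms] powr_def using l0 by simp
  also have "\<dots> = g n a" using g_pos[OF assms] by simp
  finally show ?thesis by simp
qed

lemma sfun_nonneg: assumes "1 \<le> n" "n \<le> d" "j \<in> Iset d N lam t \<sigma> n"
  shows "0 \<le> sfun n j"
proof -
  have jN: "j < N" using assms(3) Iset_sub by auto
  have c: "\<sigma> (n - 1) < d" using sig_lt assms by simp
  have "sfun n j = ln (g n j) / ln (lam j (\<sigma> (n - 1)))"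
    using sfun_Pj[OF assms(1,2) jN] Proj_fix[OF assms] by simp
  moreover have "ln (g n j) \<le> 0" using g_pos[OF assms(1,2) jN] g_le1[OF assms(1,2) jN] by simp
  moreover have "ln (lam j (\<sigma> (n - 1))) < 0" using lam_pos[OF jN c] lam_lt1[OF jN c] by simp
  ultimately show ?thesis by (simp add: divide_nonpos_neg)
qed

lemma Iset_fin: "finite (Iset d N lam t \<sigma> n)" using Iset_sub finite_subset by blast

lemma Iset_ne: "1 \<le> n \<Longrightarrow> n \<le> d \<Longrightarrow> Iset d N lam t \<sigma> n \<noteq> {}"
  using Proj_props(1)[of n 0] N1 by auto

lemma s_bounds: assumes "1 \<le> n" "n \<le> d" "a < N"
  shows "Mn n \<le> sfun n (Pj n a)" "sfun n (Pj n a) \<le> Mx n" "0 \<le> Mn n" "0 \<le> Mx n"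
proof -
  have mem: "sfun n (Pj n a) \<in> sfun n ` Iset d N lam t \<sigma> n" using Proj_props(1)[OF assms] by simp
  show 1: "Mn n \<le> sfun n (Pj n a)" unfolding Mn_def using Iset_fin mem by simp
  show 2: "sfun n (Pj n a) \<le> Mx n" unfolding Mx_def using Iset_fin mem by simp
  show 3: "0 \<le> Mn n" unfolding Mn_def using Iset_fin Iset_ne[OF assms(1,2)] sfun_nonneg[OF assms(1,2)]
    by (subst Min_ge_iff) auto
  show "0 \<le> Mx n" using 1 2 3 by simp
qed

lemma X_bounds: assumes "1 \<le> n" "n \<le> d" "i \<in> SigmaN N"
  shows "(\<Prod>l\<in>A. lam (i l) (\<sigma> (n - 1))) powr Mx n \<le> (\<Prod>l\<in>A. g n (i l))"
        "(\<Prod>l\<in>A. g n (i l)) \<le> (\<Prod>l\<in>A. lam (i l) (\<sigma> (n - 1))) powr Mn n"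
proof -
  have c: "\<sigma> (n - 1) < d" using sig_lt assms by simp
  have iN: "i l < N" for l using Sig[OF assms(3)] .
  have lp: "0 < lam (i l) (\<sigma> (n - 1))" "lam (i l) (\<sigma> (n - 1)) < 1" for l
    using lam_pos[OF iN c] lam_lt1[OF iN c] by auto
  have "(\<Prod>l\<in>A. lam (i l) (\<sigma> (n - 1))) powr Mx n = (\<Prod>l\<in>A. lam (i l) (\<sigma> (n - 1)) powr Mx n)"
    by (rule prod_powr_distrib)
  also have "\<dots> \<le> (\<Prod>l\<in>A. lam (i l) (\<sigma> (n - 1)) powr sfun n (Pj n (i l)))"
    by (rule prod_mono) (use powr_mono'[OF s_bounds(2)[OF assms(1,2) iN] less_imp_le[OF lp(1)] less_imp_le[OF lp(2)]] in simp)
  also have "\<dots> = (\<Prod>l\<in>A. g n (i l))" using g_powr[OF assms(1,2) iN] by simp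
  finally show "(\<Prod>l\<in>A. lam (i l) (\<sigma> (n - 1))) powr Mx n \<le> (\<Prod>l\<in>A. g n (i l))" .
  have "(\<Prod>l\<in>A. g n (i l)) = (\<Prod>l\<in>A. lam (i l) (\<sigma> (n - 1)) powr sfun n (Pj n (i l)))"
    using g_powr[OF assms(1,2) iN] by simp
  also have "\<dots> \<le> (\<Prod>l\<in>A. lam (i l) (\<sigma> (n - 1)) powr Mn n)"
    by (rule prod_mono) (use lp s_bounds[OF assms(1,2) iN] in \<open>auto intro: powr_mono' less_imp_le\<close>)
  also have "\<dots> = (\<Prod>l\<in>A. lam (i l) (\<sigma> (n - 1))) powr Mn n"
    by (rule prod_powr_distrib[symmetric])
  finally show "(\<Prod>l\<in>A. g n (i l)) \<le> (\<Prod>l\<in>A. lam (i l) (\<sigma> (n - 1))) powr Mn n" .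
qed


definition "CC = 1 + (1 / lam_min d N lam) powr Supper d N lam t p \<sigma> + (1 / lam_min d N lam) powr Slower d N lam t p \<sigma>"

lemma CC_gt1: "1 < CC" unfolding CC_def using lmin_pos by (simp add: add_pos_pos)

lemma main:
  assumes i: "i \<in> SigmaN N" and R: "0 < R" "R \<le> 1" and r: "0 < r" "r < R"
    and oR: "ordered d lam i R \<sigma>" and or: "ordered d lam i r \<sigma>"
  shows "inverse CC * (R / r) powr Slower d N lam t p \<sigma>
           \<le> measure (mu p) (Bball d N lam t i R) / measure (mu p) (Bball d N lam t i r)
         \<and> measure (mu p) (Bball d N lam t i R) / measure (mu p) (Bball d N lam t i r)
           \<le> CC * (R / r) powr Supper d N lam t p \<sigma>"
proof -
  define lm where "lm = lam_min d N lam"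
  have lm: "0 < lm" "lm < 1" using lmin_pos lmin_lt1 lm_def by auto
  define LR where "LR n = Lfun lam i R (\<sigma> (n - 1))" for n
  define Lr where "Lr n = Lfun lam i r (\<sigma> (n - 1))" for n
  define X where "X n = (\<Prod>l\<in>{LR n..<Lr n}. g n (i l))" for n
  define muR where "muR = (\<Prod>n\<in>{1..d}. \<Prod>l<LR n. g n (i l))"
  have iN: "i l < N" for l using Sig[OF i] .
  have c: "\<sigma> (n - 1) < d" if "n \<in> {1..d}" for n using sig_lt[of "n - 1"] that by auto
  have LRr: "LR n \<le> Lr n" if "n \<in> {1..d}" for n
    unfolding LR_def Lr_def using L_mono[OF i c[OF that] r(1)] r(2) by simp
  have mR: "measure (mu p) (Bball d N lam t i R) = muR"
    unfolding muR_def LR_def using mu_B[OF oR i] .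
  have split: "(\<Prod>l<Lr n. g n (i l)) = (\<Prod>l<LR n. g n (i l)) * X n" if n: "n \<in> {1..d}" for n
  proof -
    have "(\<Prod>l\<in>{..<LR n} \<union> {LR n..<Lr n}. g n (i l)) = (\<Prod>l<LR n. g n (i l)) * X n"
      unfolding X_def by (rule prod.union_disjoint) auto
    then show ?thesis unfolding ivl_disj_un_one(2)[OF LRr[OF n]] .
  qed
  have mr: "measure (mu p) (Bball d N lam t i r) = muR * (\<Prod>n\<in>{1..d}. X n)"
    unfolding mu_B[OF or i] muR_def prod.distrib[symmetric] Lr_def[symmetric]
    by (rule prod.cong[OF refl]) (rule split)
  have gp: "0 < g n (i l)" if "n \<in> {1..d}" for n l using g_pos iN that by auto
  have muRp: "0 < muR" unfolding muR_def using gp by (auto intro!: prod_pos)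
  have Xp: "0 < (\<Prod>n\<in>{1..d}. X n)" unfolding X_def using gp by (auto intro!: prod_pos)
  have ratio: "measure (mu p) (Bball d N lam t i R) / measure (mu p) (Bball d N lam t i r)
      = 1 / (\<Prod>n\<in>{1..d}. X n)" unfolding mR mr using muRp by simp
  have quot: "(\<Prod>l\<in>{LR n..<Lr n}. lam (i l) (\<sigma> (n - 1))) =
       cprod lam i (Lr n) (\<sigma> (n - 1)) / cprod lam i (LR n) (\<sigma> (n - 1))" if n: "n \<in> {1..d}" for n
    using cprod_split[OF LRr[OF n], of i "\<sigma> (n - 1)"] cprod_pos[OF i c[OF n], of "LR n"] by simp
  have q_lo: "lm * (r / R) \<le> cprod lam i (Lr n) (\<sigma> (n - 1)) / cprod lam i (LR n) (\<sigma> (n - 1))"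
    if n: "n \<in> {1..d}" for n
  proof -
    have a: "lm * r < cprod lam i (Lr n) (\<sigma> (n - 1))"
      unfolding lm_def Lr_def using L_gt[OF i c[OF n] r(1)] r R by simp
    have b: "cprod lam i (LR n) (\<sigma> (n - 1)) \<le> R" "0 < cprod lam i (LR n) (\<sigma> (n - 1))"
      unfolding LR_def using L_le[OF i c[OF n] R(1)] cprod_pos[OF i c[OF n]] by auto
    have "lm * (r / R) = (lm * r) / R" by simp
    also have "\<dots> \<le> cprod lam i (Lr n) (\<sigma> (n - 1)) / R" using a R by (intro divide_right_mono) auto
    also have "\<dots> \<le> cprod lam i (Lr n) (\<sigma> (n - 1)) / cprod lam i (LR n) (\<sigma> (n - 1))"
      using b a lm r less_imp_le[OF cprod_pos[OF i c[OF n], of "Lr n"]] by (intro divide_left_mono) auto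
    finally show ?thesis .
  qed
  have q_hi: "cprod lam i (Lr n) (\<sigma> (n - 1)) / cprod lam i (LR n) (\<sigma> (n - 1)) \<le> (1 / lm) * (r / R)"
    if n: "n \<in> {1..d}" for n
  proof -
    have a: "cprod lam i (Lr n) (\<sigma> (n - 1)) \<le> r" "0 < cprod lam i (Lr n) (\<sigma> (n - 1))"
      unfolding Lr_def using L_le[OF i c[OF n] r(1)] cprod_pos[OF i c[OF n]] by auto
    have b: "lm * R < cprod lam i (LR n) (\<sigma> (n - 1))"
      unfolding lm_def LR_def using L_gt[OF i c[OF n] R(1,2)] by simp
    have "cprod lam i (Lr n) (\<sigma> (n - 1)) / cprod lam i (LR n) (\<sigma> (n - 1))
        \<le> r / cprod lam i (LR n) (\<sigma> (n - 1))" using a b lm R less_imp_le[OF cprod_pos[OF i c[OF n], of "LR n"]] by (intro divide_right_mono) auto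
    also have "\<dots> \<le> r / (lm * R)" using b lm R r mult_pos_pos[OF cprod_pos[OF i c[OF n], of "LR n"] mult_pos_pos[OF lm(1) R(1)]]
      by (intro divide_left_mono) auto
    also have "\<dots> = (1 / lm) * (r / R)" by simp
    finally show ?thesis .
  qed
  have X_lo: "(lm * (r / R)) powr Mx n \<le> X n" if n: "n \<in> {1..d}" for n
  proof -
    have "(lm * (r / R)) powr Mx n \<le> (cprod lam i (Lr n) (\<sigma> (n - 1)) / cprod lam i (LR n) (\<sigma> (n - 1))) powr Mx n"
      using q_lo[OF n] s_bounds(4)[of n 0] n N1 lm r R by (intro powr_mono2) auto
    also have "\<dots> \<le> X n" unfolding X_def quot[OF n, symmetric] using X_bounds(1)[of n i] n i by auto
    finally show ?thesis .
  qed
  have X_hi: "X n \<le> ((1 / lm) * (r / R)) powr Mn n" if n: "n \<in> {1..d}" for n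
  proof -
    have "X n \<le> (cprod lam i (Lr n) (\<sigma> (n - 1)) / cprod lam i (LR n) (\<sigma> (n - 1))) powr Mn n"
      unfolding X_def quot[OF n, symmetric] using X_bounds(2)[of n i] n i by auto
    also have "\<dots> \<le> ((1 / lm) * (r / R)) powr Mn n"
      using q_hi[OF n] s_bounds(3)[of n 0] n N1 cprod_pos[OF i c[OF n]]
      by (intro powr_mono2) (auto intro: divide_nonneg_nonneg less_imp_le)
    finally show ?thesis .
  qed
  have P_lo: "(lm * (r / R)) powr Supper d N lam t p \<sigma> \<le> (\<Prod>n\<in>{1..d}. X n)"
  proof -
    have "(lm * (r / R)) powr Supper d N lam t p \<sigma> = (\<Prod>n\<in>{1..d}. (lm * (r / R)) powr Mx n)"
      unfolding Supper_eq using lm r R by (intro powr_sum) simp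
    also have "\<dots> \<le> (\<Prod>n\<in>{1..d}. X n)" using X_lo by (intro prod_mono) auto
    finally show ?thesis .
  qed
  have P_hi: "(\<Prod>n\<in>{1..d}. X n) \<le> ((1 / lm) * (r / R)) powr Slower d N lam t p \<sigma>"
  proof -
    have "(\<Prod>n\<in>{1..d}. X n) \<le> (\<Prod>n\<in>{1..d}. ((1 / lm) * (r / R)) powr Mn n)"
    proof (rule prod_mono)
      fix n assume n: "n \<in> {1..d}"
      have "0 \<le> X n" unfolding X_def using gp[OF n] by (intro prod_nonneg) (auto intro: less_imp_le)
      then show "0 \<le> X n \<and> X n \<le> ((1 / lm) * (r / R)) powr Mn n" using X_hi[OF n] by simp
    qed
    also have "\<dots> = ((1 / lm) * (r / R)) powr Slower d N lam t p \<sigma>"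
      unfolding Slower_eq using lm r R by (intro powr_sum[symmetric]) simp
    finally show ?thesis .
  qed
  have up: "1 / (\<Prod>n\<in>{1..d}. X n) \<le> (1 / lm) powr Supper d N lam t p \<sigma> * (R / r) powr Supper d N lam t p \<sigma>"
    using aux_up[OF Xp lm(1) _ P_lo] r R by simp
  have low: "lm powr Slower d N lam t p \<sigma> * (R / r) powr Slower d N lam t p \<sigma> \<le> 1 / (\<Prod>n\<in>{1..d}. X n)"
    using aux_low[OF Xp lm(1) _ P_hi] r R by simp
  have C1: "(1 / lm) powr Supper d N lam t p \<sigma> \<le> CC" unfolding CC_def lm_def by simp
  have C2: "(1 / lm) powr Slower d N lam t p \<sigma> \<le> CC" unfolding CC_def lm_def by simp
  have C3: "inverse CC \<le> lm powr Slower d N lam t p \<sigma>"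
  proof -
    have e: "(1 / lm) powr Slower d N lam t p \<sigma> * lm powr Slower d N lam t p \<sigma> = 1"
      using lm by (simp add: powr_mult[symmetric])
    have pz: "0 < (1 / lm) powr Slower d N lam t p \<sigma>" using lm by simp
    then have "inverse CC \<le> inverse ((1 / lm) powr Slower d N lam t p \<sigma>)"
      using C2 by (intro le_imp_inverse_le) auto
    also have "\<dots> = lm powr Slower d N lam t p \<sigma>" using e pz by (simp add: field_simps)
    finally show ?thesis .
  qed
  have Rr: "0 \<le> (R / r) powr S" for S by simp
  show ?thesis unfolding ratio
  proof
    show "inverse CC * (R / r) powr Slower d N lam t p \<sigma> \<le> 1 / (\<Prod>n\<in>{1..d}. X n)"
      using mult_right_mono[OF C3 Rr[of "Slower d N lam t p \<sigma>"]] low by linarith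
    show "1 / (\<Prod>n\<in>{1..d}. X n) \<le> CC * (R / r) powr Supper d N lam t p \<sigma>"
      using mult_right_mono[OF C1 Rr[of "Supper d N lam t p \<sigma>"]] up by linarith
  qed
qed

end

theorem lemma5p3:
  fixes d N :: nat and lam t :: "nat \<Rightarrow> nat \<Rightarrow> real" and p :: "nat pmf" and \<sigma> :: "nat \<Rightarrow> nat"
  assumes "sponge_IFS d N lam t"
    and "\<sigma> \<in> Aset d N lam"
    and "set_pmf p = {..<N}"
  shows "\<exists>C>1. \<forall>i\<in>SigmaN N. \<forall>R r::real.
           0 < R \<and> R \<le> 1 \<and> 0 < r \<and> r < lam_min d N lam * R
           \<and> ordered d lam i R \<sigma> \<and> ordered d lam i r \<sigma> \<longrightarrow>
             inverse C * (R / r) powr Slower d N lam t p \<sigma>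
               \<le> measure (mu p) (Bball d N lam t i R) / measure (mu p) (Bball d N lam t i r)
           \<and> measure (mu p) (Bball d N lam t i R) / measure (mu p) (Bball d N lam t i r)
               \<le> C * (R / r) powr Supper d N lam t p \<sigma>"
proof -
  have "perm_d d \<sigma>" using assms(2) unfolding Aset_def ordered_def by auto
  then interpret spg d N lam t p \<sigma> using assms by unfold_locales
  show ?thesis
  proof (intro exI[of _ CC] conjI CC_gt1 ballI allI impI)
    fix i R r assume i: "i \<in> SigmaN N" and h: "0 < R \<and> R \<le> 1 \<and> 0 < r \<and> r < lam_min d N lam * R
           \<and> ordered d lam i R \<sigma> \<and> ordered d lam i r \<sigma>"
    have "lam_min d N lam * R < R" using lmin_lt1 h by simp
    moreover have "r < lam_min d N lam * R" using h by simp
    ultimately have "r < R" by linarith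
    then show "inverse CC * (R / r) powr Slower d N lam t p \<sigma>
               \<le> measure (mu p) (Bball d N lam t i R) / measure (mu p) (Bball d N lam t i r)"
      "measure (mu p) (Bball d N lam t i R) / measure (mu p) (Bball d N lam t i r)
               \<le> CC * (R / r) powr Supper d N lam t p \<sigma>"
      using main[OF i] h by auto
  qed
qed

end
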